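(* After any non-terminal history at which the chair has not (at any earlier history along it) missed an opportunity or taken a risk, there is a pair of distinct alternatives unranked by the current proto-ranking which can be offered without missing an opportunity or taking a risk.
   Context: Let $\mathcal{X}$ be a finite set of alternatives. A proto-ranking is an irreflexive and transitive binary relation on $\mathcal{X}$; a ranking is a total proto-ranking; a tournament is a total and asymmetric relation on $\mathcal{X}$. The chair has a fixed preference $\succ$, a ranking on $\mathcal{X}$. Interaction: starting from $R_0=\varnothing$, in each period $t\geq1$ with $R_{t-1}$ not total the chair offers a pair $\{x,y\}$ unranked by $R_{t-1}$, one of them wins, and $R_t$ is the transitive closure of $R_{t-1}\cup\{(\text{winner},\text{loser})\}$. A history is a finite sequence of (winner, loser) pairs arising this way, with associated current proto-ranking; it is non-terminal if that proto-ranking is not total. Errors: let $R$ be a non-total proto-ranking and $x\succ y$ alternatives unranked by $R$. Offering $\{x,y\}$ misses an opportunity at $R$ if there is $z$ with $x\succ z\succ y$ and neither $yRz$ nor $zRx$. Offering $\{x,y\}$ takes a risk at $R$ if there is $z$ with either (a) $z\succ y$, $xRz$ and not $yRz$, or (b) $x\succ z$, $zRy$ and not $zRx$. The chair has missed an opportunity or taken a risk at a history if some pair offered along it did so at the proto-ranking in force when it was offered. *)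

theory Defs
  imports Main
begin

definition proto_ranking :: "'a set \<Rightarrow> 'a rel \<Rightarrow> bool" where
  "proto_ranking X R \<longleftrightarrow> R \<subseteq> X \<times> X \<and> irrefl R \<and> trans R"

definition ranking :: "'a set \<Rightarrow> 'a rel \<Rightarrow> bool" where
  "ranking X R \<longleftrightarrow> proto_ranking X R \<and> total_on X R"

definition unranked :: "'a rel \<Rightarrow> 'a \<Rightarrow> 'a \<Rightarrow> bool" where
  "unranked R x y \<longleftrightarrow> x \<noteq> y \<and> (x, y) \<notin> R \<and> (y, x) \<notin> R"

text \<open>Current proto-ranking after a history (list of (winner, loser) pairs, in order).\<close>
definition cur :: "('a \<times> 'a) list \<Rightarrow> 'a rel" where
  "cur h = foldl (\<lambda>R (w, l). trancl (R \<union> {(w, l)})) {} h"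

inductive history :: "'a set \<Rightarrow> ('a \<times> 'a) list \<Rightarrow> bool" for X where
  Nil: "history X []"
| step: "history X h \<Longrightarrow> \<not> total_on X (cur h) \<Longrightarrow> w \<in> X \<Longrightarrow> l \<in> X \<Longrightarrow>
     unranked (cur h) w l \<Longrightarrow> history X (h @ [(w, l)])"

text \<open>Offering {x,y} with x \<succ> y (P is the chair's preference).\<close>
definition misses_opp :: "'a rel \<Rightarrow> 'a rel \<Rightarrow> 'a \<Rightarrow> 'a \<Rightarrow> bool" where
  "misses_opp P R x y \<longleftrightarrow> (\<exists>z. (x, z) \<in> P \<and> (z, y) \<in> P \<and> (y, z) \<notin> R \<and> (z, x) \<notin> R)"

definition takes_risk :: "'a rel \<Rightarrow> 'a rel \<Rightarrow> 'a \<Rightarrow> 'a \<Rightarrow> bool" where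
  "takes_risk P R x y \<longleftrightarrow> (\<exists>z. ((z, y) \<in> P \<and> (x, z) \<in> R \<and> (y, z) \<notin> R)
                               \<or> ((x, z) \<in> P \<and> (z, y) \<in> R \<and> (z, x) \<notin> R))"

definition offer_error :: "'a rel \<Rightarrow> 'a rel \<Rightarrow> 'a \<Rightarrow> 'a \<Rightarrow> bool" where
  "offer_error P R a b \<longleftrightarrow>
     (if (a, b) \<in> P then misses_opp P R a b \<or> takes_risk P R a b
      else misses_opp P R b a \<or> takes_risk P R b a)"

definition erred_along :: "'a rel \<Rightarrow> ('a \<times> 'a) list \<Rightarrow> bool" where
  "erred_along P h \<longleftrightarrow> (\<exists>i < length h. offer_error P (cur (take i h)) (fst (h ! i)) (snd (h ! i)))"

end

theory Submission
  imports Defs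
begin

definition TT :: "'a rel \<Rightarrow> 'a rel \<Rightarrow> 'a rel" where
  "TT P R = R \<union> {(a,b). unranked R a b \<and> (a,b) \<in> P}"

definition inv :: "'a set \<Rightarrow> 'a rel \<Rightarrow> 'a rel \<Rightarrow> bool" where
  "inv X P R \<longleftrightarrow> R \<subseteq> X \<times> X \<and> irrefl R \<and> trans R \<and> trans (TT P R)"

lemma rk: assumes "ranking X P"
  shows "P \<subseteq> X \<times> X" "irrefl P" "trans P" "total_on X P"
  using assms unfolding ranking_def proto_ranking_def by auto

lemma P_asym: "ranking X P \<Longrightarrow> (a,b) \<in> P \<Longrightarrow> (b,a) \<notin> P"
  using rk by (metis irrefl_def transE)

lemma TT_sub: "ranking X P \<Longrightarrow> inv X P R \<Longrightarrow> TT P R \<subseteq> X \<times> X"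
  using rk(1) unfolding TT_def inv_def by blast

lemma TT_irr: "ranking X P \<Longrightarrow> inv X P R \<Longrightarrow> (a,a) \<notin> TT P R"
  unfolding TT_def inv_def unranked_def irrefl_def by auto

lemma TT_asym: "ranking X P \<Longrightarrow> inv X P R \<Longrightarrow> (a,b) \<in> TT P R \<Longrightarrow> (b,a) \<notin> TT P R"
  using TT_irr by (metis inv_def transE)

lemma TT_intro: "(a,b) \<in> P \<Longrightarrow> a \<noteq> b \<Longrightarrow> (b,a) \<notin> R \<Longrightarrow> (a,b) \<in> TT P R"
  unfolding TT_def unranked_def by auto

lemma TT_total: "ranking X P \<Longrightarrow> a \<in> X \<Longrightarrow> b \<in> X \<Longrightarrow> a \<noteq> b \<Longrightarrow> (a,b) \<in> TT P R \<or> (b,a) \<in> TT P R"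
  using rk(4) unfolding TT_def unranked_def total_on_def by blast

lemma TT_ranked: "ranking X P \<Longrightarrow> inv X P R \<Longrightarrow> (a,b) \<in> TT P R \<Longrightarrow> \<not> unranked R a b \<Longrightarrow> (a,b) \<in> R"
  using TT_asym TT_irr unfolding unranked_def TT_def by blast

lemma R_TT: "R \<subseteq> TT P R" unfolding TT_def by auto

lemma lemA:
  assumes rP: "ranking X P" and iv: "inv X P R" and u: "unranked R x y" and xy: "(x,y) \<in> P"
    and nm: "\<not> misses_opp P R x y" and nr: "\<not> takes_risk P R x y"
    and xz: "(x,z) \<in> TT P R" and zy: "(z,y) \<in> TT P R"
  shows False
proof -
  have tr: "trans R" using iv inv_def by blast
  show False
  proof (cases "(x,z) \<in> R")
    case True
    have "(z,y) \<notin> R" using True u tr unfolding unranked_def by (meson transE)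
    moreover have "(y,z) \<notin> R" using TT_asym[OF rP iv zy] R_TT by blast
    ultimately have "(z,y) \<in> P" using zy unfolding TT_def by auto
    then show False using nr True \<open>(y,z) \<notin> R\<close> unfolding takes_risk_def by blast
  next
    case False
    then have xzP: "unranked R x z" "(x,z) \<in> P" using xz unfolding TT_def by auto
    show False
    proof (cases "(z,y) \<in> R")
      case True
      then show False using nr xzP unfolding takes_risk_def unranked_def by blast
    next
      case False
      then have "unranked R z y" "(z,y) \<in> P" using zy unfolding TT_def by auto
      then show False using nm xzP unfolding misses_opp_def unranked_def by blast
    qed
  qed
qed

lemma lemB:
  assumes rP: "ranking X P" and iv: "inv X P R" and u: "unranked R x y" and xy: "(x,y) \<in> P"
    and adj: "\<And>z. (x,z) \<in> TT P R \<Longrightarrow> (z,y) \<in> TT P R \<Longrightarrow> False"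
  shows "\<not> misses_opp P R x y \<and> \<not> takes_risk P R x y"
proof -
  have ir: "irrefl P" using rk[OF rP] by auto
  have irR: "irrefl R" using iv inv_def by blast
  have ne: "\<And>a b. (a,b) \<in> P \<Longrightarrow> a \<noteq> b" using ir unfolding irrefl_def by metis
  have T1: "\<And>a b. (a,b) \<in> P \<Longrightarrow> (b,a) \<notin> R \<Longrightarrow> (a,b) \<in> TT P R"
  proof -
    fix a b assume "(a,b) \<in> P" "(b,a) \<notin> R"
    then show "(a,b) \<in> TT P R" using TT_intro ne by metis
  qed
  have T2: "\<And>a b. (a,b) \<in> R \<Longrightarrow> (a,b) \<in> TT P R"
    using R_TT by (metis subsetD)
  show ?thesis
  proof (intro conjI notI)
    assume "misses_opp P R x y"
    then obtain z where "(x, z) \<in> P" "(z, y) \<in> P" "(y, z) \<notin> R" "(z, x) \<notin> R"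
      unfolding misses_opp_def by blast
    then show False using adj[of z] T1[of x z] T1[of z y] by blast
  next
    assume "takes_risk P R x y"
    then obtain z where "((z, y) \<in> P \<and> (x, z) \<in> R \<and> (y, z) \<notin> R)
                               \<or> ((x, z) \<in> P \<and> (z, y) \<in> R \<and> (z, x) \<notin> R)"
      unfolding takes_risk_def by blast
    then show False
    proof
      assume "(z, y) \<in> P \<and> (x, z) \<in> R \<and> (y, z) \<notin> R"
      then show False using adj[of z] T1[of z y] T2[of x z] by blast
    next
      assume "(x, z) \<in> P \<and> (z, y) \<in> R \<and> (z, x) \<notin> R"
      then show False using adj[of z] T1[of x z] T2[of z y] by blast
    qed
  qed
qed

lemma trancl_ins:
  assumes "trans R"
  shows "(a,b) \<in> trancl (R \<union> {(w,l)}) \<longleftrightarrow> (a,b) \<in> R \<or> ((a = w \<or> (a,w) \<in> R) \<and> (l = b \<or> (l,b) \<in> R))"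
  using assms by (auto simp: trancl_insert trancl_id rtrancl_eq_or_trancl)

lemma lemC:
  assumes rP: "ranking X P" and iv: "inv X P R" and u: "unranked R x y" and xy: "(x,y) \<in> P"
  shows "inv X P (trancl (R \<union> {(x,y)}))"
proof -
  let ?R' = "trancl (R \<union> {(x,y)})"
  have tr: "trans R" and sub: "R \<subseteq> X \<times> X" using iv inv_def by auto
  have trT: "trans (TT P R)" using iv inv_def by blast
  have xX: "x \<in> X" "y \<in> X" using rk(1)[OF rP] xy by auto
  have xyT: "(x,y) \<in> TT P R" using u xy unfolding TT_def by auto
  have c: "\<And>a b. (a,b) \<in> ?R' \<longleftrightarrow> (a,b) \<in> R \<or> ((a = x \<or> (a,x) \<in> R) \<and> (y = b \<or> (y,b) \<in> R))"
    using trancl_ins[OF tr] .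
  have RR': "R \<subseteq> ?R'" by auto
  have s1: "?R' \<subseteq> TT P R"
  proof
    fix p assume "p \<in> ?R'"
    then obtain a b where p: "p = (a,b)" and "(a,b) \<in> ?R'" by (cases p) auto
    then have "(a,b) \<in> R \<or> ((a = x \<or> (a,x) \<in> R) \<and> (y = b \<or> (y,b) \<in> R))" using c by blast
    then show "p \<in> TT P R" using p xyT R_TT[of R P] trT by (metis subsetD transE)
  qed
  have irr: "irrefl ?R'" using s1 TT_irr[OF rP iv] unfolding irrefl_def by blast
  have sub': "?R' \<subseteq> X \<times> X" by (rule trancl_subset_Sigma) (use sub xX in blast)
  have eq: "TT P ?R' = TT P R"
  proof
    show "TT P ?R' \<subseteq> TT P R"
      using s1 RR' unfolding TT_def unranked_def by blast
  next
    show "TT P R \<subseteq> TT P ?R'"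
    proof
      fix p assume pT: "p \<in> TT P R"
      then obtain a b where p: "p = (a,b)" by (cases p) auto
      have ab: "a \<noteq> b" using pT p TT_irr[OF rP iv] by blast
      show "p \<in> TT P ?R'"
      proof (cases "(a,b) \<in> ?R'")
        case True then show ?thesis using p R_TT by blast
      next
        case False
        have "(b,a) \<notin> ?R'" using s1 TT_asym[OF rP iv] pT p by blast
        moreover have "(a,b) \<in> P" using pT p False RR' unfolding TT_def by auto
        ultimately show ?thesis using False ab p unfolding TT_def unranked_def by auto
      qed
    qed
  qed
  show ?thesis unfolding inv_def using irr sub' eq trT by auto
qed

lemma lemD:
  assumes rP: "ranking X P" and iv: "inv X P R" and u: "unranked R x y" and xy: "(x,y) \<in> P"
    and adj: "\<And>z. (x,z) \<in> TT P R \<Longrightarrow> (z,y) \<in> TT P R \<Longrightarrow> False"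
  shows "inv X P (trancl (R \<union> {(y,x)}))"
proof -
  let ?R' = "trancl (R \<union> {(y,x)})"
  let ?T = "TT P R"
  let ?S = "(?T - {(x,y)}) \<union> {(y,x)}"
  have tr: "trans R" and sub: "R \<subseteq> X \<times> X" using iv inv_def by auto
  have trT: "trans ?T" using iv inv_def by blast
  have TX: "?T \<subseteq> X \<times> X" using TT_sub[OF rP iv] .
  have xX: "x \<in> X" "y \<in> X" using rk(1)[OF rP] xy by auto
  have xyne: "x \<noteq> y" using u unfolding unranked_def by auto
  have xyT: "(x,y) \<in> ?T" using u xy unfolding TT_def by auto
  have irT: "\<And>a. (a,a) \<notin> ?T" using TT_irr[OF rP iv] .
  have asT: "\<And>a b. (a,b) \<in> ?T \<Longrightarrow> (b,a) \<notin> ?T" using TT_asym[OF rP iv] .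
  have tot: "\<And>a b. a \<in> X \<Longrightarrow> b \<in> X \<Longrightarrow> a \<noteq> b \<Longrightarrow> (a,b) \<in> ?T \<or> (b,a) \<in> ?T"
    using TT_total[OF rP] .
  have c: "\<And>a b. (a,b) \<in> ?R' \<longleftrightarrow> (a,b) \<in> R \<or> ((a = y \<or> (a,y) \<in> R) \<and> (x = b \<or> (x,b) \<in> R))"
    using trancl_ins[OF tr] .
  have RR': "R \<subseteq> ?R'" by auto
  have yx': "(y,x) \<in> ?R'" by auto
  have xyR: "(x,y) \<notin> R" "(y,x) \<notin> R" using u unfolding unranked_def by auto
  have L: "\<And>a. (a,y) \<in> ?T \<Longrightarrow> a \<noteq> x \<Longrightarrow> (a,x) \<in> ?T"
  proof -
    fix a assume "(a,y) \<in> ?T" "a \<noteq> x"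
    moreover have "a \<in> X" using \<open>(a,y) \<in> ?T\<close> TX by blast
    ultimately show "(a,x) \<in> ?T" using tot[of a x] xX adj by blast
  qed
  have Rt: "\<And>b. (x,b) \<in> ?T \<Longrightarrow> b \<noteq> y \<Longrightarrow> (y,b) \<in> ?T"
  proof -
    fix b assume "(x,b) \<in> ?T" "b \<noteq> y"
    moreover have "b \<in> X" using \<open>(x,b) \<in> ?T\<close> TX by blast
    ultimately show "(y,b) \<in> ?T" using tot[of b y] xX adj by blast
  qed
  have s1: "?R' \<subseteq> ?S"
  proof
    fix p assume "p \<in> ?R'"
    then obtain a b where p: "p = (a,b)" and ab: "(a,b) \<in> ?R'" by (cases p) auto
    then have h: "(a,b) \<in> R \<or> ((a = y \<or> (a,y) \<in> R) \<and> (x = b \<or> (x,b) \<in> R))" using c by blast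
    show "p \<in> ?S"
    proof (cases "(a,b) \<in> R")
      case True
      then show ?thesis using p R_TT[of R P] xyR by auto
    next
      case False
      then have h2: "(a = y \<or> (a,y) \<in> R) \<and> (x = b \<or> (x,b) \<in> R)" using h by blast
      show ?thesis
      proof (cases "a = y \<and> b = x")
        case True then show ?thesis using p by auto
      next
        case nt: False
        have ne1: "(a,b) \<noteq> (x,y)"
        proof
          assume "(a,b) = (x,y)"
          then have "(x = y \<or> (x,y) \<in> R)" using h2 by auto
          then show False using xyne xyR by auto
        qed
        have "(a,b) \<in> ?T"
        proof (cases "a = y")
          case True
          then have "(x,b) \<in> R" using h2 nt by auto
          then have "b \<noteq> y" using xyR by auto
          then show ?thesis using Rt \<open>(x,b) \<in> R\<close> R_TT True by blast
        next
          case False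
          then have ay: "(a,y) \<in> R" using h2 by auto
          then have "a \<noteq> x" using xyR by auto
          then have ax: "(a,x) \<in> ?T" using L ay R_TT by blast
          show ?thesis
          proof (cases "b = x")
            case True then show ?thesis using ax by simp
          next
            case False
            then have "(x,b) \<in> ?T" using h2 R_TT by blast
            then show ?thesis using ax trT by (meson transE)
          qed
        qed
        then show ?thesis using p ne1 by auto
      qed
    qed
  qed
  have irS: "\<And>a. (a,a) \<notin> ?S" using irT xyne by auto
  have asS: "\<And>a b. (a,b) \<in> ?S \<Longrightarrow> (b,a) \<notin> ?S" using asT xyne by auto
  have trS: "trans ?S"
  proof (rule transI)
    fix a b c assume ab: "(a,b) \<in> ?S" and bc: "(b,c) \<in> ?S"
    show "(a,c) \<in> ?S"
    proof (cases "(a,b) = (y,x)")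
      case True
      then have ay: "a = y" "b = x" by auto
      then have "(x,c) \<in> ?T" "c \<noteq> y" using bc xyne by auto
      then have "(y,c) \<in> ?T" using Rt by blast
      then show ?thesis using ay xyne by auto
    next
      case abn: False
      then have abT: "(a,b) \<in> ?T" "(a,b) \<noteq> (x,y)" using ab by auto
      show ?thesis
      proof (cases "(b,c) = (y,x)")
        case True
        then have "b = y" "c = x" by auto
        then have "a \<noteq> x" using abT by auto
        then have "(a,x) \<in> ?T" using L abT \<open>b = y\<close> by blast
        then show ?thesis using \<open>c = x\<close> xyne by auto
      next
        case False
        then have bcT: "(b,c) \<in> ?T" using bc by auto
        have acT: "(a,c) \<in> ?T" using abT bcT trT by (meson transE)
        have "(a,c) \<noteq> (x,y)"
        proof
          assume "(a,c) = (x,y)"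
          then show False using adj abT(1) bcT by auto
        qed
        then show ?thesis using acT by auto
      qed
    qed
  qed
  have SX: "?S \<subseteq> X \<times> X" using TX xX by auto
  have irr: "irrefl ?R'" using s1 irS unfolding irrefl_def by blast
  have sub': "?R' \<subseteq> X \<times> X" by (rule trancl_subset_Sigma) (use sub xX in blast)
  have eq: "TT P ?R' = ?S"
  proof
    show "TT P ?R' \<subseteq> ?S"
    proof
      fix p assume pT: "p \<in> TT P ?R'"
      then obtain a b where p: "p = (a,b)" by (cases p) auto
      show "p \<in> ?S"
      proof (cases "(a,b) \<in> ?R'")
        case True then show ?thesis using s1 p by blast
      next
        case False
        then have "unranked ?R' a b" "(a,b) \<in> P" using pT p unfolding TT_def by auto
        then have "unranked R a b" "(a,b) \<noteq> (x,y)" using RR' yx' unfolding unranked_def by auto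
        then show ?thesis using \<open>(a,b) \<in> P\<close> p unfolding TT_def by auto
      qed
    qed
  next
    show "?S \<subseteq> TT P ?R'"
    proof
      fix p assume pS: "p \<in> ?S"
      then obtain a b where p: "p = (a,b)" by (cases p) auto
      have ab: "a \<noteq> b" using pS p irS by blast
      show "p \<in> TT P ?R'"
      proof (cases "(a,b) \<in> ?R'")
        case True then show ?thesis using p R_TT by blast
      next
        case False
        have "(b,a) \<notin> ?R'" using s1 asS pS p by blast
        moreover have "(a,b) \<in> P"
        proof -
          have "(a,b) \<noteq> (y,x)" using False yx' by auto
          then have "(a,b) \<in> ?T" using pS p by auto
          moreover have "(a,b) \<notin> R" using False RR' by auto
          ultimately show ?thesis unfolding TT_def by auto
        qed
        ultimately show ?thesis using False ab p unfolding TT_def unranked_def by auto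
      qed
    qed
  qed
  show ?thesis unfolding inv_def using irr sub' eq trS by auto
qed

lemma cur_snoc: "cur (h @ [(w,l)]) = trancl (cur h \<union> {(w,l)})"
  unfolding cur_def by simp

lemma erred_snoc: "erred_along P (h @ [p]) \<longleftrightarrow> erred_along P h \<or> offer_error P (cur h) (fst p) (snd p)"
proof -
  have "erred_along P (h @ [p]) \<longleftrightarrow> (\<exists>i < Suc (length h). offer_error P (cur (take i (h @ [p]))) (fst ((h @ [p]) ! i)) (snd ((h @ [p]) ! i)))"
    unfolding erred_along_def by simp
  also have "\<dots> \<longleftrightarrow> (\<exists>i < length h. offer_error P (cur (take i (h @ [p]))) (fst ((h @ [p]) ! i)) (snd ((h @ [p]) ! i)))
      \<or> offer_error P (cur h) (fst p) (snd p)"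
    by (auto simp: less_Suc_eq)
  also have "\<dots> \<longleftrightarrow> erred_along P h \<or> offer_error P (cur h) (fst p) (snd p)"
    unfolding erred_along_def by (auto simp: nth_append)
  finally show ?thesis .
qed

lemma inv_hist:
  assumes "history X h" and rP: "ranking X P" and "\<not> erred_along P h"
  shows "inv X P (cur h)"
  using assms(1,3)
proof (induction h rule: history.induct)
  case Nil
  have "TT P {} = P" using rk(2)[OF rP] unfolding TT_def unranked_def irrefl_def by auto
  then show ?case unfolding inv_def cur_def using rk(3)[OF rP] by (simp add: irrefl_def trans_def)
next
  case (step h w l)
  let ?R = "cur h"
  have ne: "\<not> erred_along P h" "\<not> offer_error P ?R w l" using step.prems erred_snoc[of P h "(w,l)"] by auto
  have iv: "inv X P ?R" using step.IH ne by blast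
  have wl: "w \<noteq> l" using step.hyps unfolding unranked_def by auto
  show ?case
  proof (cases "(w,l) \<in> P")
    case True
    then show ?thesis using lemC[OF rP iv step.hyps(5) True] by (simp only: cur_snoc)
  next
    case False
    then have lw: "(l,w) \<in> P" using rk(4)[OF rP] step.hyps(3,4) wl unfolding total_on_def by blast
    have u: "unranked ?R l w" using step.hyps(5) unfolding unranked_def by auto
    have "\<not> misses_opp P ?R l w" "\<not> takes_risk P ?R l w" using ne(2) False unfolding offer_error_def by auto
    then have adj: "\<And>z. (l,z) \<in> TT P ?R \<Longrightarrow> (z,w) \<in> TT P ?R \<Longrightarrow> False"
      using lemA[OF rP iv u lw] by blast
    have "inv X P (trancl (?R \<union> {(w,l)}))"
      by (rule lemD[OF rP iv u lw]) (rule adj)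
    then show ?thesis by (simp only: cur_snoc)
  qed
qed

lemma exists_adj:
  assumes rP: "ranking X P" and fin: "finite X" and iv: "inv X P R"
  shows "unranked R a b \<Longrightarrow> (a,b) \<in> P \<Longrightarrow>
     \<exists>x y. unranked R x y \<and> (x,y) \<in> P \<and> (\<forall>z. (x,z) \<in> TT P R \<longrightarrow> (z,y) \<notin> TT P R)"
proof (induction "card {c \<in> X. (a,c) \<in> TT P R \<and> (c,b) \<in> TT P R}" arbitrary: a b rule: less_induct)
  case less
  let ?T = "TT P R"
  have TX: "?T \<subseteq> X \<times> X" using TT_sub[OF rP iv] .
  have trT: "trans ?T" using iv inv_def by blast
  have trR: "trans R" using iv inv_def by blast
  show ?case
  proof (cases "\<forall>z. (a,z) \<in> ?T \<longrightarrow> (z,b) \<notin> ?T")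
    case True then show ?thesis using less.prems by blast
  next
    case False
    then obtain c where ac: "(a,c) \<in> ?T" and cb: "(c,b) \<in> ?T" by blast
    have sub1: "\<And>d. (d,c) \<in> ?T \<Longrightarrow> (d,b) \<in> ?T" using cb trT by (meson transE)
    show ?thesis
    proof (cases "unranked R a c")
      case True
      then have acP: "(a,c) \<in> P" using ac unfolding TT_def unranked_def by auto
      have "{d \<in> X. (a,d) \<in> ?T \<and> (d,c) \<in> ?T} \<subseteq> {d \<in> X. (a,d) \<in> ?T \<and> (d,b) \<in> ?T}"
        using sub1 by blast
      moreover have "c \<notin> {d \<in> X. (a,d) \<in> ?T \<and> (d,c) \<in> ?T}" using TT_irr[OF rP iv] by blast
      moreover have "c \<in> {d \<in> X. (a,d) \<in> ?T \<and> (d,b) \<in> ?T}" using ac cb TX by blast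
      ultimately have "{d \<in> X. (a,d) \<in> ?T \<and> (d,c) \<in> ?T} \<subset> {d \<in> X. (a,d) \<in> ?T \<and> (d,b) \<in> ?T}"
        by blast
      then have "card {d \<in> X. (a,d) \<in> ?T \<and> (d,c) \<in> ?T} < card {d \<in> X. (a,d) \<in> ?T \<and> (d,b) \<in> ?T}"
        using fin by (intro psubset_card_mono) auto
      then show ?thesis using less.hyps True acP by blast
    next
      case acr: False
      show ?thesis
      proof (cases "unranked R c b")
        case True
        then have cbP: "(c,b) \<in> P" using cb unfolding TT_def unranked_def by auto
        have sub3: "\<And>d. (c,d) \<in> ?T \<Longrightarrow> (a,d) \<in> ?T" using ac trT by (meson transE)
        have "{d \<in> X. (c,d) \<in> ?T \<and> (d,b) \<in> ?T} \<subseteq> {d \<in> X. (a,d) \<in> ?T \<and> (d,b) \<in> ?T}"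
          using sub3 by blast
        moreover have "c \<notin> {d \<in> X. (c,d) \<in> ?T \<and> (d,b) \<in> ?T}" using TT_irr[OF rP iv] by blast
        moreover have "c \<in> {d \<in> X. (a,d) \<in> ?T \<and> (d,b) \<in> ?T}" using ac cb TX by blast
        ultimately have "{d \<in> X. (c,d) \<in> ?T \<and> (d,b) \<in> ?T} \<subset> {d \<in> X. (a,d) \<in> ?T \<and> (d,b) \<in> ?T}"
          by blast
        then have "card {d \<in> X. (c,d) \<in> ?T \<and> (d,b) \<in> ?T} < card {d \<in> X. (a,d) \<in> ?T \<and> (d,b) \<in> ?T}"
          using fin by (intro psubset_card_mono) auto
        then show ?thesis using less.hyps True cbP by blast
      next
        case False
        have "(a,c) \<in> R" "(c,b) \<in> R" using TT_ranked[OF rP iv] ac cb acr False by auto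
        then have "(a,b) \<in> R" using trR by (meson transE)
        then show ?thesis using less.prems unfolding unranked_def by auto
      qed
    qed
  qed
qed

theorem proposition2:
  fixes X :: "'a set" and P :: "'a rel" and h :: "('a \<times> 'a) list"
  assumes "finite X"
    and "ranking X P"
    and "history X h"
    and "\<not> total_on X (cur h)"
    and "\<not> erred_along P h"
  shows "\<exists>x y. x \<in> X \<and> y \<in> X \<and> unranked (cur h) x y \<and> \<not> offer_error P (cur h) x y"
proof -
  let ?R = "cur h"
  have rP: "ranking X P" using assms(2) .
  have iv: "inv X P ?R" using inv_hist[OF assms(3) rP assms(5)] .
  obtain a b where ab: "a \<in> X" "b \<in> X" "a \<noteq> b" "(a,b) \<notin> ?R" "(b,a) \<notin> ?R"
    using assms(4) unfolding total_on_def by blast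
  obtain a' b' where "unranked ?R a' b'" "(a',b') \<in> P"
  proof (cases "(a,b) \<in> P")
    case True then show ?thesis using that[of a b] ab unfolding unranked_def by blast
  next
    case False
    then have "(b,a) \<in> P" using rk(4)[OF rP] ab unfolding total_on_def by blast
    then show ?thesis using that[of b a] ab unfolding unranked_def by blast
  qed
  then obtain x y where xy: "unranked ?R x y" "(x,y) \<in> P"
      and adj: "\<forall>z. (x,z) \<in> TT P ?R \<longrightarrow> (z,y) \<notin> TT P ?R"
    using exists_adj[OF rP assms(1) iv, of a' b'] by blast
  have "\<not> misses_opp P ?R x y \<and> \<not> takes_risk P ?R x y"
    by (rule lemB[OF rP iv xy]) (use adj in blast)
  then have "\<not> offer_error P ?R x y" using xy(2) unfolding offer_error_def by auto
  moreover have "x \<in> X" "y \<in> X" using xy(2) rk(1)[OF rP] by auto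
  ultimately show ?thesis using xy(1) by blast
qed

end
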